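(* Let $k\ge 3$ and $N\ge 1$ be integers, and let $A\subseteq\{1,\dots,N\}$ be a non-empty set containing no $k$AP. Let $E_N\subset[0,1]$ be the self-similar attractor of the iterated function system $\{f_j: j\in A\}$, where $f_j(x)=\frac{x}{12N}+\frac{6j}{12N}$, i.e. $E_N=\bigcap_{\ell\ge 1}\bigcup_{i_1,\dots,i_\ell\in A} f_{i_1}\circ\cdots\circ f_{i_\ell}([0,1])$. Then $\dim_H(E_N)=\frac{\log\#A}{\log(12N)}$, and $E_N$ $\varepsilon_N$-avoids $k$APs, where $\varepsilon_N=\frac{1}{12N}$.
   Context: A $k$-term arithmetic progression ($k$AP) is a set $P=\{x, x+\lambda, \dots, x+(k-1)\lambda\}\subset\mathbb{R}$ with $\lambda>0$, called the gap length of $P$. A set $E\subset\mathbb{R}$ $\varepsilon$-avoids $k$APs if for every $k$AP $P$ with gap length $\lambda$ one has $\sup_{p\in P}\inf_{x\in E}|x-p|\ge\varepsilon\lambda$. *)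

theory Defs
  imports "HOL-Analysis.Analysis"
begin

text \<open>Weight of a covering set: diam(U)^s, with the conventions diam(empty)^s = 0
  and d^0 = 1 for nonempty U (so that H^0 is the counting measure).\<close>
definition hweight :: "real \<Rightarrow> real set \<Rightarrow> real" where
  "hweight s U = (if U = {} then 0 else if s = 0 then 1 else diameter U powr s)"

definition hausdorff_pre :: "real \<Rightarrow> real \<Rightarrow> real set \<Rightarrow> ennreal" where
  "hausdorff_pre s \<delta> E =
     (INF U \<in> {U :: nat \<Rightarrow> real set. E \<subseteq> (\<Union>i. U i) \<and>
                 (\<forall>i. bounded (U i) \<and> diameter (U i) \<le> \<delta>)}.
        (\<Sum>i. ennreal (hweight s (U i))))"

definition hausdorff_measure :: "real \<Rightarrow> real set \<Rightarrow> ennreal" where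
  "hausdorff_measure s E = (SUP \<delta> \<in> {0<..}. hausdorff_pre s \<delta> E)"

definition hausdorff_dim :: "real set \<Rightarrow> ereal" where
  "hausdorff_dim E = Inf {ereal s | s. s \<ge> 0 \<and> hausdorff_measure s E = 0}"

definition kAP :: "nat \<Rightarrow> real \<Rightarrow> real \<Rightarrow> real set" where
  "kAP k x d = {x + real i * d | i. i < k}"

definition contains_kAP :: "nat \<Rightarrow> real set \<Rightarrow> bool" where
  "contains_kAP k S \<longleftrightarrow> (\<exists>x d. d > 0 \<and> kAP k x d \<subseteq> S)"

definition eps_avoids_kAP :: "nat \<Rightarrow> real \<Rightarrow> real set \<Rightarrow> bool" where
  "eps_avoids_kAP k \<epsilon> E \<longleftrightarrow>
     (\<forall>x d. d > 0 \<longrightarrow> (SUP p \<in> kAP k x d. infdist p E) \<ge> \<epsilon> * d)"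

definition ifs_map :: "nat \<Rightarrow> nat \<Rightarrow> real \<Rightarrow> real" where
  "ifs_map N j x = x / (12 * real N) + 6 * real j / (12 * real N)"

definition ifs_comp :: "nat \<Rightarrow> nat list \<Rightarrow> real \<Rightarrow> real" where
  "ifs_comp N is = foldr (\<lambda>j g. ifs_map N j \<circ> g) is id"

definition attractor :: "nat \<Rightarrow> nat set \<Rightarrow> real set" where
  "attractor N A = (\<Inter>l \<in> {1..}. \<Union>is \<in> {is. length is = l \<and> set is \<subseteq> A}.
                      ifs_comp N is ` {0..1})"

end

theory Submission
  imports Defs
begin
definition Cyl :: "nat \<Rightarrow> nat list \<Rightarrow> real set" where
  "Cyl N w = ifs_comp N w ` {0..1}"

definition Words :: "nat set \<Rightarrow> nat \<Rightarrow> nat list set" where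
  "Words A l = {w. length w = l \<and> set w \<subseteq> A}"

lemma ifs_comp_Nil[simp]: "ifs_comp N [] = id"
  by (simp add: ifs_comp_def)

lemma ifs_comp_Cons[simp]: "ifs_comp N (j # w) = ifs_map N j \<circ> ifs_comp N w"
  by (simp add: ifs_comp_def)

lemma ifs_comp_append: "ifs_comp N (u @ v) = ifs_comp N u \<circ> ifs_comp N v"
  by (induction u) auto

lemma ifs_comp_affine:
  "ifs_comp N w y = ifs_comp N w 0 + y / (12 * real N) ^ length w"
proof (induction w arbitrary: y)
  case Nil then show ?case by simp
next
  case (Cons j w)
  show ?case using Cons[of y] by (simp add: ifs_map_def add_divide_distrib divide_divide_eq_left mult_ac)
qed

locale ifs =
  fixes N :: nat and A :: "nat set"
  assumes N1: "N \<ge> 1" and AN: "A \<subseteq> {1..N}" and Ane: "A \<noteq> {}"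
begin

abbreviation "E \<equiv> attractor N A"
abbreviation "r \<equiv> 1 / (12 * real N)"

lemma finA: "finite A" using AN finite_subset by blast

lemma r_pos: "0 < r" and r_le: "r \<le> 1/12" 
  using N1 by (auto simp: field_simps)

lemma map_range: "j \<in> A \<Longrightarrow> y \<in> {0..1} \<Longrightarrow>
   ifs_map N j y \<in> {6 * real j * r .. 6 * real j * r + r}"
  using N1 by (auto simp: ifs_map_def field_simps)

lemma map_unit: "j \<in> A \<Longrightarrow> y \<in> {0..1} \<Longrightarrow> ifs_map N j y \<in> {0..1}"
proof -
  assume j: "j \<in> A" and y: "y \<in> {0..1}"
  have "1 \<le> j" "j \<le> N" using j AN by auto
  then have "6 * real j + 1 \<le> 12 * real N" by simp
  then show ?thesis using y N1 by (auto simp: ifs_map_def field_simps)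
qed

lemma comp_unit: "set w \<subseteq> A \<Longrightarrow> y \<in> {0..1} \<Longrightarrow> ifs_comp N w y \<in> {0..1}"
  by (induction w arbitrary: y) (auto intro: map_unit simp del: atLeastAtMost_iff)

lemma sep:
  "length u = length v \<Longrightarrow> u \<noteq> v \<Longrightarrow> set u \<subseteq> A \<Longrightarrow> set v \<subseteq> A \<Longrightarrow>
   y \<in> {0..1} \<Longrightarrow> z \<in> {0..1} \<Longrightarrow>
   5 * r ^ length u \<le> \<bar>ifs_comp N u y - ifs_comp N v z\<bar>"
proof (induction u arbitrary: v)
  case Nil then show ?case by simp
next
  case (Cons i u)
  then obtain j v' where v: "v = j # v'" by (cases v) auto
  have yu: "ifs_comp N u y \<in> {0..1}" and zv: "ifs_comp N v' z \<in> {0..1}"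
    using comp_unit[of u y] comp_unit[of v' z] Cons.prems v by auto
  show ?case
  proof (cases "i = j")
    case True
    then have "u \<noteq> v'" using Cons.prems v by auto
    then have IH: "5 * r ^ length u \<le> \<bar>ifs_comp N u y - ifs_comp N v' z\<bar>"
      using Cons v by auto
    have "ifs_comp N (i#u) y - ifs_comp N v z = r * (ifs_comp N u y - ifs_comp N v' z)"
      using True v by (simp add: ifs_map_def diff_divide_distrib)
    then have "\<bar>ifs_comp N (i#u) y - ifs_comp N v z\<bar> = r * \<bar>ifs_comp N u y - ifs_comp N v' z\<bar>"
      using r_pos by (simp add: abs_mult)
    moreover have "r * (5 * r ^ length u) \<le> r * \<bar>ifs_comp N u y - ifs_comp N v' z\<bar>"
      using IH r_pos by (intro mult_left_mono) auto
    ultimately show ?thesis by (simp add: mult_ac)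
  next
    case False
    have ij: "i \<in> A" "j \<in> A" using Cons.prems v by auto
    have a: "ifs_comp N (i#u) y \<in> {6 * real i * r .. 6 * real i * r + r}"
      using map_range[OF ij(1) yu] by simp
    have b: "ifs_comp N v z \<in> {6 * real j * r .. 6 * real j * r + r}"
      using map_range[OF ij(2) zv] v by simp
    have "1 \<le> \<bar>real i - real j\<bar>" using False by (cases "i < j") auto
    then have "6 * r * 1 \<le> 6 * r * \<bar>real i - real j\<bar>" using r_pos by (intro mult_left_mono) auto
    also have "\<dots> = \<bar>6 * r\<bar> * \<bar>real i - real j\<bar>" using r_pos by simp
    also have "\<dots> = \<bar>6 * real i * r - 6 * real j * r\<bar>"
    proof -
      have "6 * real i * r - 6 * real j * r = (6*r) * (real i - real j)" by (simp only: algebra_simps)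
      then show ?thesis by (simp only: abs_mult)
    qed
    finally have c: "6 * r \<le> \<bar>6 * real i * r - 6 * real j * r\<bar>" by simp
    have "r ^ length u \<le> 1" using r_pos r_le by (intro power_le_one) auto
    then have "r * r ^ length u \<le> r * 1" using r_pos by (intro mult_left_mono) auto
    then have "r ^ length (i#u) \<le> r" by simp
    then show ?thesis using a b c by auto
  qed
qed

lemma in_Cyl: "x \<in> Cyl N w \<longleftrightarrow> (\<exists>y\<in>{0..1}. x = ifs_comp N w y)"
  unfolding Cyl_def by auto

lemma Cyl_take: "x \<in> Cyl N w \<Longrightarrow> set w \<subseteq> A \<Longrightarrow> x \<in> Cyl N (take l w)"
proof -
  assume x: "x \<in> Cyl N w" and w: "set w \<subseteq> A"
  then obtain y where y: "y \<in> {0..1}" "x = ifs_comp N w y" by (auto simp: in_Cyl)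
  have "set (drop l w) \<subseteq> A" using w by (meson order_trans set_drop_subset)
  then have "ifs_comp N (drop l w) y \<in> {0..1}" using y comp_unit by blast
  moreover have "x = ifs_comp N (take l w) (ifs_comp N (drop l w) y)"
    using y ifs_comp_append[of N "take l w" "drop l w"] by simp
  ultimately show ?thesis by (auto simp: in_Cyl)
qed

lemma Words_take: "w \<in> Words A n \<Longrightarrow> l \<le> n \<Longrightarrow> take l w \<in> Words A l"
  unfolding Words_def by (auto dest: in_set_takeD)

lemma memE: "x \<in> E \<longleftrightarrow> (\<forall>l. \<exists>w\<in>Words A l. x \<in> Cyl N w)"
proof
  assume x: "x \<in> E"
  show "\<forall>l. \<exists>w\<in>Words A l. x \<in> Cyl N w"
  proof
    fix l
    have "Suc l \<in> {1..}" by simp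
    then obtain w where w: "w \<in> Words A (Suc l)" "x \<in> Cyl N w"
      using x unfolding attractor_def Words_def Cyl_def by blast
    have "take l w \<in> Words A l" using Words_take[OF w(1), of l] by simp
    moreover have "x \<in> Cyl N (take l w)" using Cyl_take[OF w(2)] w(1) by (auto simp: Words_def)
    ultimately show "\<exists>w\<in>Words A l. x \<in> Cyl N w" by blast
  qed
next
  assume "\<forall>l. \<exists>w\<in>Words A l. x \<in> Cyl N w"
  then show "x \<in> E" unfolding attractor_def Words_def Cyl_def by blast
qed

definition "a0 = (SOME a. a \<in> A)"
lemma a0A: "a0 \<in> A" unfolding a0_def using Ane by (simp add: some_in_eq)

definition "p0 = 6 * real a0 / (12 * real N - 1)"

lemma p0_unit: "p0 \<in> {0..1}"
proof -
  have "a0 \<le> N" using a0A AN by auto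
  then have "6 * real a0 \<le> 12 * real N - 1" using N1 by simp
  moreover have "0 < 12 * real N - 1" using N1 by simp
  ultimately show ?thesis unfolding p0_def by (auto simp: field_simps)
qed

lemma p0_fix: "ifs_map N a0 p0 = p0"
proof -
  have h: "0 < 12 * real N - 1" "0 < 12 * real N" using N1 by auto
  show ?thesis unfolding ifs_map_def p0_def using h
    by (simp add: field_simps)
qed

lemma rep_fix: "ifs_comp N (replicate n a0) p0 = p0"
  by (induction n) (auto simp: p0_fix)

lemma point_inE: "set w \<subseteq> A \<Longrightarrow> ifs_comp N w p0 \<in> E"
proof -
  assume w: "set w \<subseteq> A"
  show ?thesis unfolding memE
  proof
    fix l
    let ?v = "w @ replicate l a0"
    have v: "set ?v \<subseteq> A" using w a0A by auto
    have "ifs_comp N w p0 = ifs_comp N ?v p0"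
      by (simp add: ifs_comp_append rep_fix)
    then have "ifs_comp N w p0 \<in> Cyl N ?v" using p0_unit by (auto simp: in_Cyl)
    then have "ifs_comp N w p0 \<in> Cyl N (take l ?v)" using Cyl_take v by blast
    moreover have "take l ?v \<in> Words A l" using Words_take[of ?v "length ?v" l] v
      by (auto simp: Words_def)
    ultimately show "\<exists>v\<in>Words A l. ifs_comp N w p0 \<in> Cyl N v" by blast
  qed
qed

lemma Cyl_meets_E: "set w \<subseteq> A \<Longrightarrow> \<exists>x\<in>E. x \<in> Cyl N w"
proof -
  assume w: "set w \<subseteq> A"
  have "ifs_comp N w p0 \<in> Cyl N w" using p0_unit unfolding in_Cyl by blast
  then show ?thesis using point_inE[OF w] by blast
qed

lemma E_ne: "E \<noteq> {}" using Cyl_meets_E[of "[]"] by auto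

lemma E_unit: "E \<subseteq> {0..1}"
proof
  fix x assume "x \<in> E"
  then obtain w where "w \<in> Words A 0" "x \<in> Cyl N w" using memE by blast
  then show "x \<in> {0..1}" by (auto simp: Words_def Cyl_def)
qed

lemma finite_Words: "finite (Words A l)"
  unfolding Words_def using finite_lists_length_eq[OF finA, of l] by (simp add: conj_commute)

lemma card_Words: "card (Words A l) = card A ^ l"
  unfolding Words_def using card_lists_length_eq[OF finA, of l] by (simp add: conj_commute)

lemma Cyl_compact: "compact (Cyl N w)"
proof -
  have "ifs_comp N w = (\<lambda>y. ifs_comp N w 0 + y / (12 * real N) ^ length w)"
    using ifs_comp_affine by blast
  moreover have "continuous_on {0..1} (\<lambda>y. ifs_comp N w 0 + y / (12 * real N) ^ length w)"
    by (intro continuous_intros) (use N1 in auto)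
  ultimately have "continuous_on {0..1} (ifs_comp N w)" by metis
  then show ?thesis unfolding Cyl_def by (intro compact_continuous_image) auto
qed

lemma E_compact: "compact E"
proof -
  have "closed E" unfolding attractor_def
    by (intro closed_INT ballI compact_imp_closed compact_UN)
       (auto simp: finite_Words[unfolded Words_def] Cyl_compact[unfolded Cyl_def])
  moreover have "bounded E" using E_unit bounded_subset bounded_closed_interval by blast
  ultimately show ?thesis by (simp add: compact_eq_bounded_closed)
qed

lemma Cyl_unique: "x \<in> Cyl N v \<Longrightarrow> x \<in> Cyl N w \<Longrightarrow> set v \<subseteq> A \<Longrightarrow> set w \<subseteq> A
   \<Longrightarrow> length v = length w \<Longrightarrow> v = w"
proof (rule ccontr)
  assume a: "x \<in> Cyl N v" "x \<in> Cyl N w" "set v \<subseteq> A" "set w \<subseteq> A" "length v = length w" "v \<noteq> w"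
  then obtain y z where "y \<in> {0..1}" "z \<in> {0..1}" "x = ifs_comp N v y" "x = ifs_comp N w z"
    by (auto simp: in_Cyl)
  then have "5 * r ^ length v \<le> 0" using sep[of v w y z] a by auto
  moreover have "0 < r ^ length v" using r_pos by simp
  ultimately show False by linarith
qed

lemma E_decomp: "x \<in> E \<Longrightarrow> \<exists>j\<in>A. \<exists>y\<in>E. x = ifs_map N j y"
proof -
  assume x: "x \<in> E"
  then obtain w1 where w1: "w1 \<in> Words A 1" "x \<in> Cyl N w1" using memE by blast
  then obtain j where j: "w1 = [j]" "j \<in> A"
    by (cases w1) (auto simp: Words_def)
  define y where "y = 12 * real N * x - 6 * real j"
  have inv: "ifs_map N j y = x" using N1 unfolding y_def ifs_map_def by (simp add: field_simps)
  have "y \<in> E" unfolding memE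
  proof
    fix l
    obtain w where w: "w \<in> Words A (Suc l)" "x \<in> Cyl N w" using memE x by blast
    then obtain j' w' where jw: "w = j' # w'" by (cases w) (auto simp: Words_def)
    have "x \<in> Cyl N (take 1 w)" using Cyl_take w by (auto simp: Words_def)
    then have "take 1 w = [j]" using Cyl_unique[of x "take 1 w" w1] w w1 j
      by (auto simp: Words_def dest: in_set_takeD)
    then have jj: "j' = j" using jw by simp
    obtain t where t: "t \<in> {0..1}" "x = ifs_map N j (ifs_comp N w' t)"
      using w(2) jw jj by (auto simp: in_Cyl)
    have "y = ifs_comp N w' t" using t N1 unfolding y_def ifs_map_def by (simp add: field_simps)
    then have "y \<in> Cyl N w'" using t by (auto simp: in_Cyl)
    moreover have "w' \<in> Words A l" using w jw by (auto simp: Words_def)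
    ultimately show "\<exists>w\<in>Words A l. y \<in> Cyl N w" by blast
  qed
  then show ?thesis using j inv by metis
qed

end

context ifs begin

abbreviation "m \<equiv> real (card A)"
abbreviation "s0 \<equiv> ln (real (card A)) / ln (12 * real N)"

lemma m_ge1: "1 \<le> m"
  using finA Ane by (simp add: Suc_leI card_gt_0_iff)

lemma ln12N: "0 < ln (12 * real N)" using N1 by simp

lemma s0_nonneg: "0 \<le> s0" using m_ge1 ln12N by simp

lemma r_powr_s0: "r powr s0 = 1 / m"
proof -
  have "r powr s0 = exp (s0 * ln r)" using r_pos by (simp add: powr_def)
  also have "ln r = - ln (12 * real N)" using N1 by (simp add: ln_div)
  also have "s0 * - ln (12 * real N) = - ln m" using ln12N by simp
  also have "exp (- ln m) = 1 / m" using m_ge1 by (simp add: exp_minus inverse_eq_divide)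
  finally show ?thesis .
qed

lemma rpow_powr: "(r ^ l) powr s = (r powr s) ^ l"
proof -
  have "(r ^ l) powr s = (r powr real l) powr s" using r_pos by (simp add: powr_realpow)
  also have "\<dots> = r powr (real l * s)" by (simp add: powr_powr)
  also have "\<dots> = (r powr s) ^ l" using r_pos by (simp add: powr_power mult.commute)
  finally show ?thesis .
qed

lemma diam_Cyl: "diameter (Cyl N w) \<le> r ^ length w"
proof (rule diameter_le)
  show "Cyl N w \<noteq> {} \<or> 0 \<le> r ^ length w" using r_pos by simp
  fix x y assume "x \<in> Cyl N w" "y \<in> Cyl N w"
  then obtain s t where st: "s \<in> {0..1}" "t \<in> {0..1}" "x = ifs_comp N w s" "y = ifs_comp N w t"
    by (auto simp: in_Cyl)
  have "x - y = (s - t) * r ^ length w"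
    using st ifs_comp_affine[of N w s] ifs_comp_affine[of N w t]
    by (simp add: power_one_over diff_divide_distrib)
  then have "norm (x - y) = \<bar>s - t\<bar> * r ^ length w" using r_pos by (simp add: abs_mult)
  also have "\<dots> \<le> 1 * r ^ length w" using st r_pos by (intro mult_right_mono) auto
  finally show "norm (x - y) \<le> r ^ length w" by simp
qed

lemma bounded_Cyl: "bounded (Cyl N w)"
  using Cyl_compact compact_imp_bounded by blast

lemma pre_upper:
  assumes s: "0 < s" and d: "0 < \<delta>" "r ^ l \<le> \<delta>"
  shows "hausdorff_pre s \<delta> E \<le> ennreal ((m * r powr s) ^ l)"
proof -
  obtain xs where xs: "set xs = Words A l" "distinct xs"
    using finite_distinct_list[OF finite_Words] by blast
  have len: "length xs = card (Words A l)" using xs distinct_card by metis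
  define U where "U i = (if i < length xs then Cyl N (xs ! i) else {})" for i
  have cover: "E \<subseteq> (\<Union>i. U i)"
  proof
    fix x assume "x \<in> E"
    then obtain w where w: "w \<in> Words A l" "x \<in> Cyl N w" using memE by blast
    then obtain i where "i < length xs" "xs ! i = w" using xs by (metis in_set_conv_nth)
    then show "x \<in> (\<Union>i. U i)" using w unfolding U_def by (intro UN_I[of i]) auto
  qed
  have wl: "i < length xs \<Longrightarrow> length (xs ! i) = l" for i
    using xs nth_mem unfolding Words_def by fastforce
  have Ub: "bounded (U i) \<and> diameter (U i) \<le> \<delta>" for i
  proof (cases "i < length xs")
    case True
    then show ?thesis using diam_Cyl[of "xs ! i"] bounded_Cyl wl d unfolding U_def by auto
  next
    case False
    then show ?thesis using d unfolding U_def by auto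
  qed
  have hw: "hweight s (U i) \<le> (r ^ l) powr s" for i
  proof (cases "i < length xs \<and> U i \<noteq> {}")
    case True
    then have "hweight s (U i) = diameter (U i) powr s" using s unfolding hweight_def by simp
    also have "\<dots> \<le> (r ^ l) powr s" using True diam_Cyl[of "xs ! i"] wl s
      unfolding U_def by (intro powr_mono2) (auto simp: diameter_ge_0 bounded_Cyl)
    finally show ?thesis .
  next
    case False
    then have "hweight s (U i) = 0" unfolding hweight_def U_def by auto
    then show ?thesis by simp
  qed
  have "(\<Sum>i. ennreal (hweight s (U i))) = (\<Sum>i<length xs. ennreal (hweight s (U i)))"
    by (rule suminf_finite) (auto simp: U_def hweight_def)
  also have "\<dots> \<le> (\<Sum>i<length xs. ennreal ((r ^ l) powr s))"
    by (intro sum_mono ennreal_leI hw)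
  also have "\<dots> = ennreal (real (length xs) * (r ^ l) powr s)"
    by (simp add: ennreal_of_nat_eq_real_of_nat ennreal_mult)
  also have "real (length xs) * (r ^ l) powr s = (m * r powr s) ^ l"
    by (simp add: len card_Words rpow_powr power_mult_distrib)
  finally have le: "(\<Sum>i. ennreal (hweight s (U i))) \<le> ennreal ((m * r powr s) ^ l)" .
  have mem: "U \<in> {U :: nat \<Rightarrow> real set. E \<subseteq> (\<Union>i. U i) \<and>
                 (\<forall>i. bounded (U i) \<and> diameter (U i) \<le> \<delta>)}" using cover Ub by blast
  show ?thesis unfolding hausdorff_pre_def
  proof (rule INF_lower2[of U])
    show "U \<in> {U :: nat \<Rightarrow> real set. E \<subseteq> (\<Union>i. U i) \<and>
                 (\<forall>i. bounded (U i) \<and> diameter (U i) \<le> \<delta>)}" by (rule mem)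
    show "(\<Sum>i. ennreal (hweight s (U i))) \<le> ennreal ((m * r powr s) ^ l)" by (rule le)
  qed
qed

lemma H_zero:
  assumes s: "s0 < s"
  shows "hausdorff_measure s E = 0"
proof -
  have s0': "0 < s" using s s0_nonneg by linarith
  have "r powr s < r powr s0" using r_pos r_le s by (intro powr_less_mono') auto
  then have "m * r powr s < m * r powr s0" using m_ge1 by (intro mult_strict_left_mono) auto
  then have q1: "m * r powr s < 1" using r_powr_s0 m_ge1 by simp
  have q0: "0 < m * r powr s" using m_ge1 r_pos by simp
  have pre0: "hausdorff_pre s \<delta> E = 0" if d: "0 < \<delta>" for \<delta>
  proof -
    have eps: "hausdorff_pre s \<delta> E \<le> 0 + ennreal e" if e: "0 < e" for e
    proof -
      obtain l1 where l1: "(m * r powr s) ^ l1 < e" using real_arch_pow_inv[OF e q1] by blast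
      obtain l2 where l2: "r ^ l2 < \<delta>" using real_arch_pow_inv[OF d, of r] r_pos r_le by auto
      have "r ^ (l1 + l2) \<le> r ^ l2" using r_pos r_le by (intro power_decreasing) auto
      then have a: "r ^ (l1 + l2) \<le> \<delta>" using l2 by linarith
      have "(m * r powr s) ^ (l1 + l2) \<le> (m * r powr s) ^ l1"
        using q0 q1 by (intro power_decreasing) auto
      then have b: "(m * r powr s) ^ (l1 + l2) \<le> e" using l1 by linarith
      have "hausdorff_pre s \<delta> E \<le> ennreal ((m * r powr s) ^ (l1 + l2))"
        by (rule pre_upper[OF s0' d a])
      also have "\<dots> \<le> ennreal e" using b by (intro ennreal_leI)
      finally show ?thesis by simp
    qed
    have "hausdorff_pre s \<delta> E \<le> 0"
    proof (rule ennreal_le_epsilon)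
      fix e :: real assume "0 < e" then show "hausdorff_pre s \<delta> E \<le> 0 + ennreal e" by (rule eps)
    qed
    then show ?thesis by (simp only: le_zero_eq)
  qed
  have "(SUP \<delta>\<in>{0<..}. hausdorff_pre s \<delta> E) = (SUP \<delta>\<in>{(0::real)<..}. (0::ennreal))"
    by (rule SUP_cong) (auto simp: pre0)
  also have "\<dots> = 0" by simp
  finally show ?thesis unfolding hausdorff_measure_def .
qed

end

context ifs begin

lemma hweight_ge:
  assumes s: "0 \<le> s" "s \<le> s0" and U: "bounded U" "diameter U \<le> 1"
  shows "diameter U powr s0 \<le> hweight s U"
proof (cases "U = {}")
  case True then show ?thesis by (simp add: hweight_def)
next
  case ne: False
  have d0: "0 \<le> diameter U" using U diameter_ge_0 by blast
  show ?thesis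
  proof (cases "s = 0")
    case True
    have "diameter U powr s0 \<le> 1 powr s0" using d0 U s0_nonneg by (intro powr_mono2) auto
    then show ?thesis using True ne by (simp add: hweight_def)
  next
    case False
    then have "hweight s U = diameter U powr s" using ne by (simp add: hweight_def)
    moreover have "diameter U powr s0 \<le> diameter U powr s" using d0 U s by (intro powr_mono') auto
    ultimately show ?thesis by simp
  qed
qed

lemma single_cyl:
  assumes U: "bounded U" "diameter U < 5 * r ^ l"
  shows "\<exists>w\<in>Words A l. E \<inter> U \<subseteq> Cyl N w"
proof (cases "E \<inter> U = {}")
  case True
  have "replicate l a0 \<in> Words A l" using a0A by (auto simp: Words_def)
  then show ?thesis using True by blast
next
  case False
  then obtain x0 where x0: "x0 \<in> E" "x0 \<in> U" by blast
  then obtain w where w: "w \<in> Words A l" "x0 \<in> Cyl N w" using memE by blast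
  have "y \<in> Cyl N w" if y: "y \<in> E" "y \<in> U" for y
  proof -
    obtain v where v: "v \<in> Words A l" "y \<in> Cyl N v" using memE y by blast
    show ?thesis
    proof (cases "v = w")
      case True then show ?thesis using v by simp
    next
      case False
      obtain s t where st: "s \<in> {0..1}" "t \<in> {0..1}" "x0 = ifs_comp N w s" "y = ifs_comp N v t"
        using w v by (auto simp: in_Cyl)
      have "5 * r ^ l \<le> \<bar>x0 - y\<bar>" using sep[of w v s t] False st w v by (auto simp: Words_def)
      moreover have "dist x0 y \<le> diameter U" using diameter_bounded_bound[OF U(1) x0(2) y(2)] .
      ultimately show ?thesis using U(2) by (simp add: dist_real_def)
    qed
  qed
  then show ?thesis using w by blast
qed

lemma find_level:
  assumes d: "0 < d" "d < 1"
  shows "\<exists>l. r ^ Suc l \<le> d \<and> d < r ^ l"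
proof -
  have ex: "\<exists>n. r ^ n \<le> d" using real_arch_pow_inv[OF d(1), of r] r_pos r_le
    by (auto intro: less_imp_le)
  define n where "n = (LEAST n. r ^ n \<le> d)"
  have n: "r ^ n \<le> d" unfolding n_def using ex by (rule LeastI_ex)
  have "n \<noteq> 0"
  proof
    assume "n = 0" then show False using n d by simp
  qed
  then obtain l where l: "n = Suc l" by (cases n) auto
  have "\<not> r ^ l \<le> d" using not_less_Least[of l "\<lambda>n. r ^ n \<le> d"] l unfolding n_def by simp
  then show ?thesis using n l by auto
qed

lemma one_set:
  assumes m2: "2 \<le> card A" and U: "bounded U" "diameter U \<le> r" and g: "0 < g"
  shows "\<exists>w. set w \<subseteq> A \<and> E \<inter> U \<subseteq> Cyl N w \<and> (1/m) ^ length w \<le> m * diameter U powr s0 + g"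
proof -
  have d0: "0 \<le> diameter U" using U diameter_ge_0 by blast
  have mpos: "0 < m" using m2 by simp
  show ?thesis
  proof (cases "diameter U = 0")
    case True
    have "1/m < 1" using m2 by simp
    then obtain l where l: "(1/m) ^ l < g" using real_arch_pow_inv[OF g] by blast
    have "diameter U < 5 * r ^ l" using True r_pos by simp
    then obtain w where w: "w \<in> Words A l" "E \<inter> U \<subseteq> Cyl N w" using single_cyl U by blast
    have "0 \<le> m * diameter U powr s0" using mpos by simp
    then have "(1/m) ^ l \<le> m * diameter U powr s0 + g" using l by linarith
    moreover have "length w = l" "set w \<subseteq> A" using w by (auto simp: Words_def)
    ultimately show ?thesis using w by metis
  next
    case False
    then have dpos: "0 < diameter U" using d0 by simp
    moreover have "diameter U < 1" using U r_le by simp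
    ultimately obtain l where l: "r ^ Suc l \<le> diameter U" "diameter U < r ^ l"
      using find_level by blast
    have "diameter U < 5 * r ^ l" using l dpos by simp
    then obtain w where w: "w \<in> Words A l" "E \<inter> U \<subseteq> Cyl N w" using single_cyl U by blast
    have "(1/m) ^ l = (r powr s0) ^ l" using r_powr_s0 by simp
    also have "\<dots> = (r ^ l) powr s0" by (simp add: rpow_powr)
    also have "\<dots> = m * (r ^ Suc l) powr s0"
    proof -
      have "(r ^ Suc l) powr s0 = (r * r ^ l) powr s0" by (simp only: power_Suc)
      also have "\<dots> = (r powr s0) * (r ^ l) powr s0"
        by (rule powr_mult)
      finally have "(r ^ Suc l) powr s0 = (r powr s0) * (r ^ l) powr s0" .
      then show ?thesis using r_powr_s0 mpos by simp
    qed
    also have "\<dots> \<le> m * diameter U powr s0"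
      using l r_pos mpos s0_nonneg by (intro mult_left_mono powr_mono2) auto
    finally show ?thesis using w g by (auto simp: Words_def)
  qed
qed

lemma thick:
  assumes w: "set w \<subseteq> A"
  defines "W \<equiv> {ifs_comp N w 0 - r ^ length w <..< ifs_comp N w 0 + 2 * r ^ length w}"
  shows "Cyl N w \<subseteq> W" "E \<inter> W \<subseteq> Cyl N w" "open W"
proof -
  let ?a = "ifs_comp N w 0" and ?l = "length w"
  have rl: "0 < r ^ ?l" using r_pos by simp
  show "Cyl N w \<subseteq> W"
  proof
    fix x assume "x \<in> Cyl N w"
    then obtain t where t: "t \<in> {0..1}" "x = ifs_comp N w t" by (auto simp: in_Cyl)
    have "x = ?a + t * r ^ ?l" using t ifs_comp_affine[of N w t]
      by (simp add: power_one_over)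
    moreover have "t * r ^ ?l \<le> r ^ ?l" using t rl by (simp add: mult_left_le_one_le)
    moreover have "0 \<le> t * r ^ ?l" using t rl by simp
    ultimately show "x \<in> W" using rl unfolding W_def by auto
  qed
  show "E \<inter> W \<subseteq> Cyl N w"
  proof
    fix x assume x: "x \<in> E \<inter> W"
    then obtain v where v: "v \<in> Words A ?l" "x \<in> Cyl N v" using memE by blast
    show "x \<in> Cyl N w"
    proof (cases "v = w")
      case True then show ?thesis using v by simp
    next
      case False
      obtain t where t: "t \<in> {0..1}" "x = ifs_comp N v t" using v by (auto simp: in_Cyl)
      have "5 * r ^ ?l \<le> \<bar>?a - x\<bar>" using sep[of w v 0 t] False t v w by (auto simp: Words_def)
      moreover have "\<bar>?a - x\<bar> < 2 * r ^ ?l" using x unfolding W_def by auto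
      ultimately show ?thesis using rl by linarith
    qed
  qed
  show "open W" unfolding W_def by simp
qed

lemma counting:
  assumes J: "finite J" "J \<noteq> {}" and w: "\<And>i. i \<in> J \<Longrightarrow> set (w i) \<subseteq> A"
    and cov: "E \<subseteq> (\<Union>i\<in>J. Cyl N (w i))"
  shows "1 \<le> (\<Sum>i\<in>J. (1/m) ^ length (w i))"
proof -
  define L where "L = Max ((\<lambda>i. length (w i)) ` J)"
  have lL: "i \<in> J \<Longrightarrow> length (w i) \<le> L" for i unfolding L_def using J by simp
  define S where "S i = {v \<in> Words A L. take (length (w i)) v = w i}" for i
  have sub: "Words A L \<subseteq> (\<Union>i\<in>J. S i)"
  proof
    fix v assume v: "v \<in> Words A L"
    then obtain x where x: "x \<in> E" "x \<in> Cyl N v" using Cyl_meets_E by (auto simp: Words_def)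
    then obtain i where i: "i \<in> J" "x \<in> Cyl N (w i)" using cov by blast
    have "x \<in> Cyl N (take (length (w i)) v)" using Cyl_take x v by (auto simp: Words_def)
    moreover have "set (take (length (w i)) v) \<subseteq> A" using v by (auto simp: Words_def dest: in_set_takeD)
    moreover have "length (take (length (w i)) v) = length (w i)" using v lL[OF i(1)]
      by (auto simp: Words_def)
    ultimately have "take (length (w i)) v = w i" using Cyl_unique i w by blast
    then show "v \<in> (\<Union>i\<in>J. S i)" using v i unfolding S_def by blast
  qed
  have cS: "card (S i) \<le> card A ^ (L - length (w i))" if i: "i \<in> J" for i
  proof -
    have "S i \<subseteq> (\<lambda>u. w i @ u) ` Words A (L - length (w i))"
    proof
      fix v assume v: "v \<in> S i"
      then have "v = w i @ drop (length (w i)) v" unfolding S_def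
        by (metis (mono_tags, lifting) append_take_drop_id mem_Collect_eq)
      moreover have "drop (length (w i)) v \<in> Words A (L - length (w i))"
        using v unfolding S_def Words_def by (auto dest: in_set_dropD)
      ultimately show "v \<in> (\<lambda>u. w i @ u) ` Words A (L - length (w i))" by blast
    qed
    then have "card (S i) \<le> card ((\<lambda>u. w i @ u) ` Words A (L - length (w i)))"
      using finite_Words by (intro card_mono) auto
    also have "\<dots> \<le> card (Words A (L - length (w i)))" by (rule card_image_le[OF finite_Words])
    finally show ?thesis by (simp add: card_Words)
  qed
  have "card A ^ L = card (Words A L)" by (simp add: card_Words)
  also have "\<dots> \<le> card (\<Union>i\<in>J. S i)"
    using sub J finite_Words by (intro card_mono) (auto simp: S_def)
  also have "\<dots> \<le> (\<Sum>i\<in>J. card (S i))" by (rule card_UN_le[OF J(1)])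
  also have "\<dots> \<le> (\<Sum>i\<in>J. card A ^ (L - length (w i)))" using cS by (intro sum_mono) auto
  finally have nat_ineq: "card A ^ L \<le> (\<Sum>i\<in>J. card A ^ (L - length (w i)))" .
  have mpos: "0 < m" using finA Ane by (simp add: card_gt_0_iff)
  have "m ^ L * 1 = real (card A ^ L)" by simp
  also have "\<dots> \<le> real (\<Sum>i\<in>J. card A ^ (L - length (w i)))" using nat_ineq by linarith
  also have "\<dots> = (\<Sum>i\<in>J. m ^ (L - length (w i)))" by simp
  also have "\<dots> = (\<Sum>i\<in>J. m ^ L * (1/m) ^ length (w i))"
  proof (rule sum.cong)
    fix i assume "i \<in> J"
    then have "length (w i) \<le> L" by (rule lL)
    then show "m ^ (L - length (w i)) = m ^ L * (1/m) ^ length (w i)"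
      using mpos by (simp add: power_diff power_one_over)
  qed simp
  also have "\<dots> = m ^ L * (\<Sum>i\<in>J. (1/m) ^ length (w i))" by (simp add: sum_distrib_left)
  finally show ?thesis using mpos by (simp add: mult_le_cancel_left)
qed

end

context ifs begin

lemma core:
  assumes m2: "2 \<le> card A" and U: "\<And>i. bounded (U i)" "\<And>i. diameter (U i) \<le> r"
    and cov: "E \<subseteq> (\<Union>i. U i)"
  shows "ennreal (1/m) \<le> (\<Sum>i. ennreal (diameter (U i) powr s0))"
proof -
  define f where "f i = diameter (U i) powr s0" for i
  have f0: "0 \<le> f i" for i unfolding f_def by simp
  have mpos: "0 < m" using m2 by simp
  show ?thesis
  proof (cases "summable f")
    case False
    then have "(\<Sum>i. ennreal (f i)) = top" using f0 summable_iff_suminf_neq_top by blast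
    then show ?thesis unfolding f_def by simp
  next
    case sf: True
    have key: "1 \<le> m * (\<Sum>i. f i) + e" if e: "0 < e" for e
    proof -
      define g where "g i = e * (1/2) ^ Suc i" for i
      have gpos: "0 < g i" for i unfolding g_def using e by simp
      have gsum: "g sums e" unfolding g_def using sums_mult[OF power_half_series, of e] by simp
      have "\<forall>i. \<exists>w. set w \<subseteq> A \<and> E \<inter> U i \<subseteq> Cyl N w \<and>
              (1/m) ^ length w \<le> m * f i + g i"
        using one_set[OF m2 U(1) U(2) gpos] unfolding f_def by blast
      then obtain w where w: "\<And>i. set (w i) \<subseteq> A" "\<And>i. E \<inter> U i \<subseteq> Cyl N (w i)"
          "\<And>i. (1/m) ^ length (w i) \<le> m * f i + g i"
        by metis
      define W where "W i = {ifs_comp N (w i) 0 - r ^ length (w i) <..<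
                              ifs_comp N (w i) 0 + 2 * r ^ length (w i)}" for i
      have Wp: "Cyl N (w i) \<subseteq> W i" "E \<inter> W i \<subseteq> Cyl N (w i)" "open (W i)" for i
        unfolding W_def using thick[OF w(1)[of i]] by auto
      have "E \<subseteq> (\<Union>i\<in>UNIV. W i)"
      proof
        fix x assume x: "x \<in> E"
        then obtain i where "x \<in> U i" using cov by blast
        then have "x \<in> W i" using x w(2)[of i] Wp(1)[of i] by blast
        then show "x \<in> (\<Union>i\<in>UNIV. W i)" by blast
      qed
      then obtain J where J: "J \<subseteq> UNIV" "finite J" "E \<subseteq> (\<Union>i\<in>J. W i)"
        using compactE_image[OF E_compact, of UNIV W] Wp(3) by metis
      have covJ: "E \<subseteq> (\<Union>i\<in>J. Cyl N (w i))" using J(3) Wp(2) by blast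
      have Jne: "J \<noteq> {}" using covJ E_ne by auto
      have "1 \<le> (\<Sum>i\<in>J. (1/m) ^ length (w i))" by (rule counting[OF J(2) Jne w(1) covJ])
      also have "\<dots> \<le> (\<Sum>i\<in>J. m * f i + g i)" using w(3) by (intro sum_mono)
      also have "\<dots> = m * (\<Sum>i\<in>J. f i) + (\<Sum>i\<in>J. g i)"
        by (simp add: sum.distrib sum_distrib_left)
      also have "(\<Sum>i\<in>J. f i) \<le> (\<Sum>i. f i)" using sf J(2) f0 by (intro sum_le_suminf) auto
      also have "(\<Sum>i\<in>J. g i) \<le> (\<Sum>i. g i)" using sums_summable[OF gsum] J(2) gpos
        by (intro sum_le_suminf) (auto intro: less_imp_le)
      also have "(\<Sum>i. g i) = e" using gsum sums_unique by metis
      finally show ?thesis using mpos by (simp add: mult_left_mono)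
    qed
    have "1 \<le> m * (\<Sum>i. f i)" by (rule field_le_epsilon) (rule key)
    then have "1/m \<le> (\<Sum>i. f i)" using mpos by (simp add: field_simps)
    moreover have "(\<Sum>i. ennreal (f i)) = ennreal (\<Sum>i. f i)" using f0 sf by (rule suminf_ennreal2)
    ultimately show ?thesis unfolding f_def by (simp add: ennreal_leI)
  qed
qed

lemma H_pos:
  assumes s: "0 \<le> s" "s \<le> s0"
  shows "hausdorff_measure s E \<noteq> 0"
proof -
  have "r \<in> {0<..}" using r_pos by simp
  then have H_ge: "hausdorff_pre s r E \<le> hausdorff_measure s E"
    unfolding hausdorff_measure_def by (rule SUP_upper)
  show ?thesis
  proof (cases "s = 0")
    case True
    have "1 \<le> hausdorff_pre s r E" unfolding hausdorff_pre_def
    proof (rule INF_greatest)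
      fix U :: "nat \<Rightarrow> real set"
      assume U: "U \<in> {U. E \<subseteq> (\<Union>i. U i) \<and> (\<forall>i. bounded (U i) \<and> diameter (U i) \<le> r)}"
      obtain x where "x \<in> E" using E_ne by blast
      then obtain i where i: "x \<in> U i" using U by blast
      have one: "ennreal (hweight s (U i)) = 1" using i True by (auto simp: hweight_def)
      have "ennreal (hweight s (U i)) \<le> (\<Sum>j<Suc i. ennreal (hweight s (U j)))"
        by (rule member_le_sum) auto
      also have "\<dots> \<le> (\<Sum>j. ennreal (hweight s (U j)))" by (rule sum_le_suminf[OF summableI]) auto
      finally show "1 \<le> (\<Sum>j. ennreal (hweight s (U j)))" using one by simp
    qed
    then show ?thesis using H_ge by (metis not_one_le_zero order_trans)
  next
    case False
    then have s0pos: "0 < s0" using s by linarith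
    then have "0 < ln m" using ln12N by (simp add: zero_less_divide_iff)
    then have "1 < m" using m_ge1 by simp
    then have m2: "2 \<le> card A" by simp
    have "ennreal (1/m) \<le> hausdorff_pre s r E" unfolding hausdorff_pre_def
    proof (rule INF_greatest)
      fix U :: "nat \<Rightarrow> real set"
      assume U: "U \<in> {U. E \<subseteq> (\<Union>i. U i) \<and> (\<forall>i. bounded (U i) \<and> diameter (U i) \<le> r)}"
      then have Ub: "\<And>i. bounded (U i)" "\<And>i. diameter (U i) \<le> r" "E \<subseteq> (\<Union>i. U i)" by auto
      have "ennreal (1/m) \<le> (\<Sum>i. ennreal (diameter (U i) powr s0))" by (rule core[OF m2 Ub])
      also have "\<dots> \<le> (\<Sum>i. ennreal (hweight s (U i)))"
      proof (rule suminf_le)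
        fix i
        have "diameter (U i) \<le> 1" using Ub(2)[of i] r_le by linarith
        then show "ennreal (diameter (U i) powr s0) \<le> ennreal (hweight s (U i))"
          using hweight_ge[OF s Ub(1)] by (intro ennreal_leI) auto
      qed (rule summableI)+
      finally show "ennreal (1/m) \<le> (\<Sum>i. ennreal (hweight s (U i)))" .
    qed
    moreover have "0 < ennreal (1/m)" using m2 by simp
    ultimately show ?thesis using H_ge by (metis order.strict_trans2 not_less_zero le_zero_eq order.strict_iff_not)
  qed
qed

lemma dim_eq: "hausdorff_dim E = ereal s0"
proof -
  let ?S = "{ereal s | s. s \<ge> 0 \<and> hausdorff_measure s E = 0}"
  have lb: "ereal s0 \<le> Inf ?S"
  proof (rule Inf_greatest)
    fix t assume "t \<in> ?S"
    then obtain s where s: "t = ereal s" "s \<ge> 0" "hausdorff_measure s E = 0" by blast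
    have "\<not> s < s0"
    proof
      assume "s < s0"
      then show False using H_pos[of s] s by simp
    qed
    then show "ereal s0 \<le> t" using s by simp
  qed
  have ub: "Inf ?S \<le> ereal s0"
  proof (rule dense_ge)
    fix y assume y: "ereal s0 < y"
    show "Inf ?S \<le> y"
    proof (cases y)
      case (real t)
      then have "s0 < t" using y by simp
      then have "ereal t \<in> ?S" using H_zero[of t] s0_nonneg by auto
      then show ?thesis using real by (simp add: Inf_lower)
    next
      case PInf then show ?thesis by simp
    next
      case MInf then show ?thesis using y by simp
    qed
  qed
  show ?thesis unfolding hausdorff_dim_def using lb ub by (rule antisym[rotated])
qed

end

context ifs begin

lemma nonuniform:
  assumes k3: "k \<ge> 3" and noAP: "\<not> contains_kAP k (real ` A)" and d: "0 < d"
    and jA: "\<And>i. i < k \<Longrightarrow> j i \<in> A"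
    and e': "\<And>i. i < k \<Longrightarrow> e' i \<in> {0..1}"
    and close: "\<And>i. i < k \<Longrightarrow> \<bar>ifs_map N (j i) (e' i) - (x + real i * d)\<bar> < d / (12 * real N)"
    and nu: "i0 < k" "j i0 \<noteq> j 0"
  shows False
proof -
  define K where "K = 12 * real N"
  have K: "12 \<le> K" unfolding K_def using N1 by simp
  define u where "u i = 6 * real (j i) - K * x - real i * (K * d)" for i
  have ub: "- d - 1 < u i \<and> u i < d" if i: "i < k" for i
  proof -
    have "\<bar>(e' i + 6 * real (j i)) / K - (x + real i * d)\<bar> < d / K"
      using close[OF i] unfolding K_def ifs_map_def by (simp add: add_divide_distrib)
    moreover have "((e' i + 6 * real (j i)) - K * (x + real i * d)) / K
        = (e' i + 6 * real (j i)) / K - K * (x + real i * d) / K" by (rule diff_divide_distrib)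
    moreover have "K * (x + real i * d) / K = x + real i * d" using K by simp
    ultimately have "\<bar>((e' i + 6 * real (j i)) - K * (x + real i * d)) / K\<bar> < d / K" by simp
    then have "\<bar>(e' i + 6 * real (j i)) - K * (x + real i * d)\<bar> / K < d / K"
      using K by (simp only: abs_divide)
    then have "\<bar>(e' i + 6 * real (j i)) - K * (x + real i * d)\<bar> < d / K * K"
      using K by (simp only: pos_divide_less_eq)
    then have "\<bar>(e' i + 6 * real (j i)) - K * (x + real i * d)\<bar> < d"
      using K by simp
    moreover have "(e' i + 6 * real (j i)) - K * (x + real i * d) = e' i + u i"
      unfolding u_def by (simp add: algebra_simps)
    ultimately show ?thesis using e'[OF i] by auto
  qed
  have jb: "1 \<le> real (j i) \<and> real (j i) \<le> real N" if "i < k" for i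
    using jA[OF that] AN by auto
  define t where "t = k - 1"
  have k1: "t < k" "2 \<le> real t" using k3 unfolding t_def by auto
  have d13: "d < 1/3"
  proof (rule ccontr)
    assume "\<not> d < 1/3"
    then have dd: "1/3 \<le> d" by simp
    have k0: "0 < k" using k3 by simp
    define Q where "Q = real t * (K * d)"
    have eq: "u t - u 0 = 6 * (real (j t) - real (j 0)) - Q"
      unfolding u_def Q_def by (simp add: algebra_simps)
    have "Q < 6 * real N - 5 + 2 * d"
      using eq ub[OF k1(1)] ub[OF k0] jb[OF k1(1)] jb[OF k0] by (elim conjE) argo
    moreover have "2 * (K * d) \<le> Q" unfolding Q_def using k1 K d by (intro mult_right_mono) auto
    moreover have "(K - 2) * 1 \<le> (K - 2) * (3 * d)" using dd K by (intro mult_left_mono) auto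
    then have "K - 2 \<le> 3 * (K * d) - 6 * d" by (simp add: algebra_simps)
    moreover have "K = 12 * real N" by (simp add: K_def)
    moreover have "1 \<le> real N" using N1 by simp
    ultimately show False using d by argo
  qed
  have ub': "- 4/3 < u i \<and> u i < 1/3" if "i < k" for i using ub[OF that] d13 by auto
  have second: "int (j (i+2)) - 2 * int (j (i+1)) + int (j i) = 0" if i: "i + 2 < k" for i
  proof -
    define z where "z = int (j (i+2)) - 2 * int (j (i+1)) + int (j i)"
    have "6 * real_of_int z = u (i+2) - 2 * u (i+1) + u i"
      unfolding z_def u_def by (simp add: algebra_simps)
    moreover have "i < k" "i + 1 < k" "i + 2 < k" using i by auto
    ultimately have "\<bar>6 * real_of_int z\<bar> < 6" using ub'[of i] ub'[of "i+1"] ub'[of "i+2"]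
      by (auto elim!: conjE)
    then have "\<bar>z\<bar> < 1" by linarith
    then show ?thesis unfolding z_def by simp
  qed
  define c where "c = int (j 1) - int (j 0)"
  have lin: "i + 1 < k \<longrightarrow> int (j i) = int (j 0) + int i * c \<and> int (j (i+1)) = int (j 0) + int (i+1) * c" for i
  proof (induction i)
    case 0 then show ?case unfolding c_def by simp
  next
    case (Suc i)
    show ?case
    proof
      assume "Suc i + 1 < k"
      then have h: "int (j i) = int (j 0) + int i * c \<and> int (j (i+1)) = int (j 0) + int (i+1) * c"
        using Suc by simp
      have "int (j (i+2)) - 2 * int (j (i+1)) + int (j i) = 0" using second \<open>Suc i + 1 < k\<close> by simp
      then show "int (j (Suc i)) = int (j 0) + int (Suc i) * c \<and>
                 int (j (Suc i + 1)) = int (j 0) + int (Suc i + 1) * c"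
        using h by (simp add: algebra_simps)
    qed
  qed
  have jl: "int (j i) = int (j 0) + int i * c" if "i < k" for i
  proof (cases i)
    case 0 then show ?thesis by simp
  next
    case (Suc i') then show ?thesis using lin[of i'] that by simp
  qed
  have "c \<noteq> 0"
  proof
    assume "c = 0"
    then have "int (j i0) = int (j 0)" using jl[OF nu(1)] by simp
    then show False using nu(2) by simp
  qed
  moreover have "c \<ge> 0"
  proof -
    have "u 1 - u 0 = 6 * real_of_int c - K * d" unfolding u_def c_def by (simp add: algebra_simps)
    moreover have "0 < K * d" using K d by simp
    ultimately have "- 5/3 < 6 * real_of_int c" using ub'[of 1] ub'[of 0] k3 by auto
    then have "-1 < c" by linarith
    then show ?thesis by simp
  qed
  ultimately have cpos: "0 < c" by simp
  have kap: "kAP k (real (j 0)) (real_of_int c) \<subseteq> real ` A"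
  proof
    fix p assume "p \<in> kAP k (real (j 0)) (real_of_int c)"
    then obtain i where i: "i < k" "p = real (j 0) + real i * real_of_int c" unfolding kAP_def by blast
    have "real_of_int (int (j i)) = real_of_int (int (j 0) + int i * c)" using jl[OF i(1)] by simp
    then have "p = real (j i)" using i by simp
    then show "p \<in> real ` A" using jA[OF i(1)] by blast
  qed
  have "0 < real_of_int c" using cpos by simp
  then have "contains_kAP k (real ` A)" unfolding contains_kAP_def using kap by blast
  then show False using noAP by simp
qed

end

context ifs begin

lemma eps_ind:
  assumes k3: "k \<ge> 3" and noAP: "\<not> contains_kAP k (real ` A)"
  shows "0 < d \<Longrightarrow> 1 < (12 * real N) ^ n * d \<Longrightarrow> (\<And>i. i < k \<Longrightarrow> e i \<in> E) \<Longrightarrow>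
    (\<And>i. i < k \<Longrightarrow> \<bar>e i - (x + real i * d)\<bar> < d / (12 * real N)) \<Longrightarrow> False"
proof (induction n arbitrary: x d e)
  case 0
  define t where "t = k - 1"
  have t: "t < k" "2 \<le> real t" "0 < k" using k3 unfolding t_def by auto
  have d1: "1 < d" using 0 by simp
  have "d / (12 * real N) \<le> d / 12" using 0 N1 by (intro divide_left_mono) auto
  then have c: "\<bar>e t - (x + real t * d)\<bar> < d / 12" "\<bar>e 0 - (x + real 0 * d)\<bar> < d / 12"
    using "0.prems"(4)[OF t(1)] "0.prems"(4)[OF t(3)] by linarith+
  have "2 * d \<le> real t * d" using t d1 by (intro mult_right_mono) auto
  moreover have "e t \<in> {0..1}" "e 0 \<in> {0..1}" using "0.prems"(3) t E_unit by blast+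
  moreover have "e t - (x + real t * d) > - (d / 12)" "e 0 - x < d / 12"
    using c unfolding abs_less_iff by auto
  ultimately show False using d1 by (simp only: atLeastAtMost_iff) argo
next
  case (Suc n)
  define K where "K = 12 * real N"
  have K: "12 \<le> K" unfolding K_def using N1 by simp
  have "\<forall>i. \<exists>jj y. i < k \<longrightarrow> (jj \<in> A \<and> y \<in> E \<and> e i = ifs_map N jj y)"
    using E_decomp Suc.prems(3) by metis
  then obtain j e' where je: "\<And>i. i < k \<Longrightarrow> j i \<in> A \<and> e' i \<in> E \<and> e i = ifs_map N (j i) (e' i)"
    by metis
  show False
  proof (cases "\<forall>i<k. j i = j 0")
    case True
    define x' where "x' = K * x - 6 * real (j 0)"
    define d' where "d' = K * d"
    show False
    proof (rule Suc.IH[of d' e' x'])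
      show "0 < d'" unfolding d'_def using K Suc.prems(1) by simp
      show "1 < (12 * real N) ^ n * d'" using Suc.prems(2) unfolding d'_def K_def
        by (simp add: mult_ac)
      show "e' i \<in> E" if "i < k" for i using je[OF that] by simp
      show "\<bar>e' i - (x' + real i * d')\<bar> < d' / (12 * real N)" if i: "i < k" for i
      proof -
        have ji: "j i = j 0" using True i by blast
        have ei: "e i = e' i / K + 6 * real (j 0) / K" using je[OF i] ji
          unfolding ifs_map_def K_def by simp
        have K0: "K \<noteq> 0" using K by simp
        have "K * e i = K * (e' i / K) + K * (6 * real (j 0) / K)" using ei by (simp only: distrib_left)
        also have "\<dots> = e' i + 6 * real (j 0)" using K0 by simp
        finally have "e' i = K * e i - 6 * real (j 0)" by simp
        then have "e' i - (x' + real i * d') = K * (e i - (x + real i * d))"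
          unfolding x'_def d'_def by (simp add: algebra_simps)
        then have "\<bar>e' i - (x' + real i * d')\<bar> = K * \<bar>e i - (x + real i * d)\<bar>"
          using K by (simp add: abs_mult)
        also have "\<dots> < K * (d / K)"
          using Suc.prems(4)[OF i] K unfolding K_def by (intro mult_strict_left_mono) auto
        also have "K * (d / K) = d' / (12 * real N)" unfolding d'_def K_def using N1 by simp
        finally show ?thesis .
      qed
    qed
  next
    case False
    then obtain i0 where i0: "i0 < k" "j i0 \<noteq> j 0" by blast
    show False
    proof (rule nonuniform[OF k3 noAP Suc.prems(1), of j e' x i0])
      show "j i \<in> A" if "i < k" for i using je[OF that] by simp
      show "e' i \<in> {0..1}" if "i < k" for i using je[OF that] E_unit by blast
      show "\<bar>ifs_map N (j i) (e' i) - (x + real i * d)\<bar> < d / (12 * real N)" if "i < k" for i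
        using je[OF that] Suc.prems(4)[OF that] by simp
    qed (use i0 in auto)
  qed
qed

end

context ifs begin

lemma eps_avoid:
  assumes k3: "k \<ge> 3" and noAP: "\<not> contains_kAP k (real ` A)"
  shows "eps_avoids_kAP k (1 / (12 * real N)) E"
  unfolding eps_avoids_kAP_def
proof (intro allI impI)
  fix x d :: real assume d: "0 < d"
  let ?P = "kAP k x d"
  have Peq: "?P = (\<lambda>i. x + real i * d) ` {..<k}" unfolding kAP_def by auto
  have bdd: "bdd_above ((\<lambda>p. infdist p E) ` ?P)" unfolding Peq
    by (intro bdd_above_finite finite_imageI) simp
  show "1 / (12 * real N) * d \<le> (SUP p\<in>?P. infdist p E)"
  proof (rule ccontr)
    assume "\<not> 1 / (12 * real N) * d \<le> (SUP p\<in>?P. infdist p E)"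
    then have lt: "(SUP p\<in>?P. infdist p E) < d / (12 * real N)" by simp
    have "\<forall>i. \<exists>y. i < k \<longrightarrow> y \<in> E \<and> infdist (x + real i * d) E = dist (x + real i * d) y"
    proof
      fix i
      obtain y where "y \<in> E" "infdist (x + real i * d) E = dist (x + real i * d) y"
        using infdist_attains_inf[OF compact_imp_closed[OF E_compact] E_ne] by blast
      then show "\<exists>y. i < k \<longrightarrow> y \<in> E \<and> infdist (x + real i * d) E = dist (x + real i * d) y"
        by blast
    qed
    then obtain e where e: "\<And>i. i < k \<Longrightarrow> e i \<in> E \<and>
        infdist (x + real i * d) E = dist (x + real i * d) (e i)" by metis
    have close: "\<bar>e i - (x + real i * d)\<bar> < d / (12 * real N)" if i: "i < k" for i
    proof -
      have "x + real i * d \<in> ?P" unfolding kAP_def using i by blast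
      then have "infdist (x + real i * d) E \<le> (SUP p\<in>?P. infdist p E)"
        using bdd by (rule cSUP_upper)
      then have "dist (x + real i * d) (e i) < d / (12 * real N)" using e[OF i] lt by simp
      then show ?thesis by (simp add: dist_real_def abs_minus_commute)
    qed
    have "1 < 12 * real N" using N1 by simp
    then obtain n where n: "1 / d < (12 * real N) ^ n" using real_arch_pow by blast
    then have "1 < (12 * real N) ^ n * d" using d by (simp add: field_simps)
    then show False using eps_ind[OF k3 noAP d] e close by blast
  qed
qed

end

theorem mainTheorem8:
  fixes k N :: nat and A :: "nat set"
  assumes "k \<ge> 3" and "N \<ge> 1"
    and "A \<subseteq> {1..N}" and "A \<noteq> {}"
    and "\<not> contains_kAP k (real ` A)"
  shows "hausdorff_dim (attractor N A) = ereal (ln (real (card A)) / ln (12 * real N))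
       \<and> eps_avoids_kAP k (1 / (12 * real N)) (attractor N A)"
proof -
  interpret ifs N A using assms by unfold_locales auto
  show ?thesis using dim_eq eps_avoid[OF assms(1) assms(5)] by simp
qed

end
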